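(* Let $G$ be a finite Weetman graph, $v_0\in V(G)$, and let $C$ be a cluster of $G$ with respect to $v_0$ contained in $S^k$ with $k\ge 1$. Then there is a unique cluster $a(C)\subseteq S^{k-1}$ adjacent to $C$ in the cluster graph $\mathcal{C}(G)$, and every path in $G$ from $v_0$ to a vertex of $C$ contains a vertex of $a(C)$.
   Context: All graphs are simple and connected; $d$ is graph distance and $\mathrm{pred}_{v_0}(v)=\{u : uv\in E(G),\ d(v_0,u)=d(v_0,v)-1\}$. $G$ is Weetman if for every vertex $v_0$: (Triangle Condition) for every two adjacent vertices $v,v'$ with $d(v_0,v)=d(v_0,v')=k$, there is $u$ with $d(v_0,u)=k-1$ and $uv,uv'\in E(G)$; (Interval Condition) for every vertex $v$, the subgraph induced by $\mathrm{pred}_{v_0}(v)$ is connected. For $i\ge0$ let $S^i=\{v: d(v_0,v)=i\}$. The clusters with respect to $v_0$ are the vertex sets of the connected components of the induced subgraphs $G[S^i]$, $i\ge 0$. The cluster graph $\mathcal{C}(G)$ has the clusters as vertices, two distinct clusters $C,C'$ being adjacent iff some $v\in C$, $v'\in C'$ satisfy $vv'\in E(G)$. *)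

theory Defs
  imports Main
begin

definition simple_graph :: "'a set \<Rightarrow> ('a \<Rightarrow> 'a \<Rightarrow> bool) \<Rightarrow> bool" where
  "simple_graph V E \<longleftrightarrow> (\<forall>x y. E x y \<longrightarrow> x \<in> V \<and> y \<in> V \<and> E y x \<and> x \<noteq> y)"

definition walk :: "'a set \<Rightarrow> ('a \<Rightarrow> 'a \<Rightarrow> bool) \<Rightarrow> 'a list \<Rightarrow> bool" where
  "walk V E xs \<longleftrightarrow> xs \<noteq> [] \<and> set xs \<subseteq> V \<and> (\<forall>i. Suc i < length xs \<longrightarrow> E (xs ! i) (xs ! Suc i))"

definition gpath :: "'a set \<Rightarrow> ('a \<Rightarrow> 'a \<Rightarrow> bool) \<Rightarrow> 'a list \<Rightarrow> bool" where
  "gpath V E xs \<longleftrightarrow> walk V E xs \<and> distinct xs"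

text \<open>The subgraph induced by S is connected (the empty set counts as connected).\<close>
definition connected_set :: "('a \<Rightarrow> 'a \<Rightarrow> bool) \<Rightarrow> 'a set \<Rightarrow> bool" where
  "connected_set E S \<longleftrightarrow> (\<forall>u\<in>S. \<forall>v\<in>S. \<exists>xs. walk S E xs \<and> hd xs = u \<and> last xs = v)"

definition connected_graph :: "'a set \<Rightarrow> ('a \<Rightarrow> 'a \<Rightarrow> bool) \<Rightarrow> bool" where
  "connected_graph V E \<longleftrightarrow> V \<noteq> {} \<and> connected_set E V"

definition gdist :: "'a set \<Rightarrow> ('a \<Rightarrow> 'a \<Rightarrow> bool) \<Rightarrow> 'a \<Rightarrow> 'a \<Rightarrow> nat" where
  "gdist V E u v = (LEAST n. \<exists>xs. walk V E xs \<and> hd xs = u \<and> last xs = v \<and> length xs = Suc n)"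

definition sphere :: "'a set \<Rightarrow> ('a \<Rightarrow> 'a \<Rightarrow> bool) \<Rightarrow> 'a \<Rightarrow> nat \<Rightarrow> 'a set" where
  "sphere V E v0 i = {v \<in> V. gdist V E v0 v = i}"

definition pred :: "'a set \<Rightarrow> ('a \<Rightarrow> 'a \<Rightarrow> bool) \<Rightarrow> 'a \<Rightarrow> 'a \<Rightarrow> 'a set" where
  "pred V E v0 v = {u \<in> V. E u v \<and> gdist V E v0 u + 1 = gdist V E v0 v}"

definition triangle_condition :: "'a set \<Rightarrow> ('a \<Rightarrow> 'a \<Rightarrow> bool) \<Rightarrow> 'a \<Rightarrow> bool" where
  "triangle_condition V E v0 \<longleftrightarrow>
     (\<forall>v\<in>V. \<forall>v'\<in>V. E v v' \<and> gdist V E v0 v = gdist V E v0 v' \<longrightarrow>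
        (\<exists>u\<in>V. gdist V E v0 u + 1 = gdist V E v0 v \<and> E u v \<and> E u v'))"

definition interval_condition :: "'a set \<Rightarrow> ('a \<Rightarrow> 'a \<Rightarrow> bool) \<Rightarrow> 'a \<Rightarrow> bool" where
  "interval_condition V E v0 \<longleftrightarrow> (\<forall>v\<in>V. connected_set E (pred V E v0 v))"

definition weetman :: "'a set \<Rightarrow> ('a \<Rightarrow> 'a \<Rightarrow> bool) \<Rightarrow> bool" where
  "weetman V E \<longleftrightarrow> (\<forall>v0\<in>V. triangle_condition V E v0 \<and> interval_condition V E v0)"

definition component_of :: "('a \<Rightarrow> 'a \<Rightarrow> bool) \<Rightarrow> 'a set \<Rightarrow> 'a set \<Rightarrow> bool" where
  "component_of E S C \<longleftrightarrow> C \<noteq> {} \<and> C \<subseteq> S \<and> connected_set E C \<and>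
     (\<forall>x\<in>C. \<forall>y\<in>S. E x y \<longrightarrow> y \<in> C)"

definition cluster :: "'a set \<Rightarrow> ('a \<Rightarrow> 'a \<Rightarrow> bool) \<Rightarrow> 'a \<Rightarrow> 'a set \<Rightarrow> bool" where
  "cluster V E v0 C \<longleftrightarrow> (\<exists>i. component_of E (sphere V E v0 i) C)"

definition cluster_adj :: "('a \<Rightarrow> 'a \<Rightarrow> bool) \<Rightarrow> 'a set \<Rightarrow> 'a set \<Rightarrow> bool" where
  "cluster_adj E C C' \<longleftrightarrow> C \<noteq> C' \<and> (\<exists>v\<in>C. \<exists>v'\<in>C'. E v v')"

end

theory Submission
  imports Defs
begin

inductive reach :: "('a \<Rightarrow> 'a \<Rightarrow> bool) \<Rightarrow> 'a set \<Rightarrow> 'a \<Rightarrow> 'a \<Rightarrow> bool" for E S where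
  rrefl: "x \<in> S \<Longrightarrow> reach E S x x"
| rstep: "reach E S x y \<Longrightarrow> E y z \<Longrightarrow> z \<in> S \<Longrightarrow> reach E S x z"

lemma reach_in: "reach E S x y \<Longrightarrow> x \<in> S \<and> y \<in> S"
  by (induction rule: reach.induct) auto

lemma reach_trans: "reach E S y z \<Longrightarrow> reach E S x y \<Longrightarrow> reach E S x z"
  by (induction rule: reach.induct) (auto intro: reach.rstep)

lemma reach_mono: "reach E S x y \<Longrightarrow> S \<subseteq> T \<Longrightarrow> reach E T x y"
  by (induction rule: reach.induct) (auto intro: reach.intros)

lemma reach_sym: assumes "\<And>x y. E x y \<Longrightarrow> E y x" "reach E S x y" shows "reach E S y x"
  using assms(2)
proof (induction rule: reach.induct)
  case (rrefl x)
  then show ?case by (rule reach.rrefl)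
next
  case (rstep x y z)
  have "y \<in> S" using reach_in[OF rstep.hyps(1)] by auto
  then have "reach E S z y" using rstep assms(1) reach.rstep[OF reach.rrefl[of z S E] _ \<open>y \<in> S\<close>] by auto
  then show ?case using rstep reach_trans by metis
qed

lemma walk_reach_nth: "walk S E xs \<Longrightarrow> i < length xs \<Longrightarrow> reach E S (xs!0) (xs!i)"
proof (induction i)
  case 0
  then show ?case unfolding walk_def by (auto intro!: reach.rrefl)
next
  case (Suc i)
  then have "reach E S (xs!0) (xs!i)" "E (xs!i) (xs!Suc i)" "xs!Suc i \<in> S"
    unfolding walk_def using nth_mem[of "Suc i" xs] by auto
  then show ?case by (rule reach.rstep)
qed

lemma walk_reach: "walk S E xs \<Longrightarrow> reach E S (hd xs) (last xs)"
proof -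
  assume w: "walk S E xs"
  then have ne: "xs \<noteq> []" unfolding walk_def by auto
  show ?thesis using walk_reach_nth[OF w, of "length xs - 1"] ne
    by (simp add: hd_conv_nth last_conv_nth)
qed

lemma walk_suffix_reach:
  assumes "walk V E xs" "j \<le> i" "i < length xs" "\<forall>l. j \<le> l \<and> l < length xs \<longrightarrow> xs!l \<in> L"
  shows "reach E L (xs!j) (xs!i)"
  using assms(2,3)
proof (induction i)
  case 0
  then show ?case using assms(4) by (auto intro!: reach.rrefl)
next
  case (Suc i)
  show ?case
  proof (cases "j = Suc i")
    case True
    then show ?thesis using assms(4) Suc by (auto intro!: reach.rrefl)
  next
    case False
    then have "reach E L (xs!j) (xs!i)" using Suc by auto
    then show ?thesis using assms(1,4) Suc unfolding walk_def by (auto intro: reach.rstep)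
  qed
qed

lemma walk_snoc: "walk S E xs \<Longrightarrow> E (last xs) z \<Longrightarrow> z \<in> S \<Longrightarrow> walk S E (xs @ [z])"
  unfolding walk_def
  apply (auto simp: nth_append)
  apply (metis Suc_lessI last_conv_nth diff_Suc_1 less_Suc_eq nth_Cons_0 nth_append_length)
  done

lemma walk_take: "walk S E xs \<Longrightarrow> 0 < j \<Longrightarrow> j \<le> length xs \<Longrightarrow> walk S E (take j xs)"
  unfolding walk_def by (auto dest: in_set_takeD)

lemma reach_walk: "reach E S x y \<Longrightarrow> \<exists>xs. walk S E xs \<and> hd xs = x \<and> last xs = y"
proof (induction rule: reach.induct)
  case (rrefl x)
  then show ?case by (intro exI[of _ "[x]"]) (auto simp: walk_def)
next
  case (rstep x y z)
  then obtain xs where "walk S E xs" "hd xs = x" "last xs = y" by auto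
  then show ?case using rstep walk_snoc[of S E xs z]
    by (intro exI[of _ "xs @ [z]"]) (auto simp: walk_def)
qed

lemma comp_eq:
  assumes "component_of E S X" "x \<in> X"
  shows "X = {y. reach E S x y}"
proof
  show "X \<subseteq> {y. reach E S x y}"
  proof
    fix y assume "y \<in> X"
    then obtain xs where "walk X E xs" "hd xs = x" "last xs = y"
      using assms unfolding component_of_def connected_set_def by blast
    then have "reach E X x y" using walk_reach by metis
    moreover have "X \<subseteq> S" using assms unfolding component_of_def by auto
    ultimately show "y \<in> {y. reach E S x y}" using reach_mono by auto
  qed
next
  have "reach E S x y \<Longrightarrow> x \<in> X \<Longrightarrow> y \<in> X" for y
    by (induction rule: reach.induct) (use assms in \<open>auto simp: component_of_def\<close>)
  then show "{y. reach E S x y} \<subseteq> X" using assms by auto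
qed

lemma reach_restrict:
  assumes "reach E S u v" "reach E S x u"
  shows "reach E {y. reach E S x y} u v"
  using assms
proof (induction rule: reach.induct)
  case (rrefl x')
  then show ?case by (auto intro: reach.rrefl)
next
  case (rstep x' y z)
  have "reach E S x y" using rstep reach_trans by metis
  then have "reach E S x z" using rstep by (auto intro: reach.rstep)
  then show ?case using rstep by (auto intro: reach.rstep)
qed

lemma comp_of_reach:
  assumes "x \<in> S" "\<And>a b. E a b \<Longrightarrow> E b a"
  shows "component_of E S {y. reach E S x y}"
  unfolding component_of_def
proof (intro conjI)
  show "{y. reach E S x y} \<noteq> {}" using assms by (auto intro: reach.rrefl)
  show "{y. reach E S x y} \<subseteq> S" using reach_in by fastforce
  show "connected_set E {y. reach E S x y}"
    unfolding connected_set_def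
  proof (intro ballI)
    fix u v assume u: "u \<in> {y. reach E S x y}" and v: "v \<in> {y. reach E S x y}"
    then have "reach E S u v" using reach_sym[OF assms(2)] reach_trans by fastforce
    then have "reach E {y. reach E S x y} u v" using reach_restrict u by auto
    then show "\<exists>xs. walk {y. reach E S x y} E xs \<and> hd xs = u \<and> last xs = v" using reach_walk by metis
  qed
  show "\<forall>xa\<in>{y. reach E S x y}. \<forall>y\<in>S. E xa y \<longrightarrow> y \<in> {y. reach E S x y}"
    by (auto intro: reach.rstep)
qed


locale WG =
  fixes V :: "'a set" and E :: "'a \<Rightarrow> 'a \<Rightarrow> bool" and v0 :: 'a
  assumes sg: "simple_graph V E" and cg: "connected_graph V E" and wm: "weetman V E"
    and v0V: "v0 \<in> V"
begin

abbreviation "dd \<equiv> gdist V E v0"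
abbreviation "Sp \<equiv> sphere V E v0"
abbreviation "Pr \<equiv> (\<lambda>w u. u \<in> pred V E v0 w)"

lemma symE: "E x y \<Longrightarrow> E y x" using sg unfolding simple_graph_def by auto
lemma inV: "E x y \<Longrightarrow> x \<in> V \<and> y \<in> V" using sg unfolding simple_graph_def by auto

lemma walk_ex: "u \<in> V \<Longrightarrow> \<exists>xs. walk V E xs \<and> hd xs = v0 \<and> last xs = u"
  using cg v0V unfolding connected_graph_def connected_set_def by auto

lemma dist_wit: assumes "u \<in> V"
  shows "\<exists>xs. walk V E xs \<and> hd xs = v0 \<and> last xs = u \<and> length xs = Suc (dd u)"
proof -
  obtain xs where xs: "walk V E xs" "hd xs = v0" "last xs = u" using walk_ex assms by blast
  then have "length xs = Suc (length xs - 1)" unfolding walk_def by (cases xs) auto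
  then have "\<exists>n. \<exists>xs. walk V E xs \<and> hd xs = v0 \<and> last xs = u \<and> length xs = Suc n" using xs by blast
  then show ?thesis unfolding gdist_def by (rule LeastI_ex)
qed

lemma dist_le: assumes "walk V E xs" "hd xs = v0" "last xs = u"
  shows "dd u \<le> length xs - 1"
proof -
  have "length xs = Suc (length xs - 1)" using assms unfolding walk_def by (cases xs) auto
  then show ?thesis unfolding gdist_def using assms by (intro Least_le) metis
qed

lemma d0: "dd v0 = 0"
  using dist_le[of "[v0]" v0] v0V by (auto simp: walk_def)

lemma d_edge: assumes "E u v" shows "dd v \<le> dd u + 1"
proof -
  have uv: "u \<in> V" "v \<in> V" using inV assms by auto
  obtain xs where xs: "walk V E xs" "hd xs = v0" "last xs = u" "length xs = Suc (dd u)"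
    using dist_wit uv by blast
  have w1: "walk V E (xs @ [v])" using walk_snoc xs assms uv by metis
  have w2: "hd (xs @ [v]) = v0" using xs unfolding walk_def by auto
  have "dd v \<le> length (xs @ [v]) - 1" using dist_le[OF w1 w2] by simp
  then show ?thesis using xs by auto
qed

lemma d_edge2: "E u v \<Longrightarrow> dd u \<le> dd v + 1" using d_edge symE by blast

lemma pred_ex: assumes "v \<in> V" "1 \<le> dd v" shows "\<exists>u. u \<in> pred V E v0 v"
proof -
  obtain xs where xs: "walk V E xs" "hd xs = v0" "last xs = v" "length xs = Suc (dd v)"
    using dist_wit assms by blast
  define u where "u = xs ! (dd v - 1)"
  have wt: "walk V E (take (dd v) xs)" using walk_take[OF xs(1), of "dd v"] xs(4) assms(2) by auto
  have "hd (take (dd v) xs) = v0" using xs assms by (cases xs) auto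
  moreover have "last (take (dd v) xs) = u" unfolding u_def using xs assms
    by (subst last_conv_nth) (auto simp: min_def)
  ultimately have "dd u \<le> dd v - 1" using dist_le[OF wt] xs assms by auto
  moreover have "E u v"
  proof -
    have "\<forall>i. Suc i < length xs \<longrightarrow> E (xs ! i) (xs ! Suc i)" using xs(1) unfolding walk_def by auto
    moreover have "Suc (dd v - 1) < length xs" using xs(4) assms(2) by auto
    ultimately have "E (xs ! (dd v - 1)) (xs ! Suc (dd v - 1))" by blast
    moreover have "xs ! Suc (dd v - 1) = v"
    proof -
      have "xs \<noteq> []" using xs(4) by auto
      then have "last xs = xs ! (length xs - 1)" by (rule last_conv_nth)
      then show ?thesis using xs(3,4) assms(2) by simp
    qed
    ultimately show ?thesis unfolding u_def by simp
  qed
  moreover have "u \<in> V" unfolding u_def using xs assms unfolding walk_def by auto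
  ultimately show ?thesis using d_edge[of u v] assms(2) unfolding pred_def by (intro exI[of _ u]) auto
qed

lemma anc_props: "Pr\<^sup>*\<^sup>* w u \<Longrightarrow> w \<in> V \<Longrightarrow> u \<in> V \<and> dd u \<le> dd w \<and> (dd u = dd w \<longrightarrow> u = w)"
proof (induction rule: rtranclp_induct)
  case base
  then show ?case by auto
next
  case (step y z)
  then show ?case unfolding pred_def by auto
qed

lemma anc_ex: "w \<in> V \<Longrightarrow> m \<le> dd w \<Longrightarrow> \<exists>z. Pr\<^sup>*\<^sup>* w z \<and> dd z = m"
proof (induction "dd w - m" arbitrary: w)
  case 0
  then show ?case by (intro exI[of _ w]) auto
next
  case (Suc n)
  then obtain p where p: "p \<in> pred V E v0 w" using pred_ex by fastforce
  then have "p \<in> V" "dd p + 1 = dd w" unfolding pred_def by auto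
  moreover have "n = dd p - m" "m \<le> dd p" using Suc.hyps(2) \<open>dd p + 1 = dd w\<close> by arith+
  ultimately obtain z where z: "Pr\<^sup>*\<^sup>* p z" "dd z = m" using Suc.hyps(1) by blast
  have "Pr w p" using p by simp
  then have "Pr\<^sup>*\<^sup>* w z" using z(1) by (rule converse_rtranclp_into_rtranclp)
  then show ?case using z(2) by blast
qed


lemma tri: "triangle_condition V E v0" and intv: "interval_condition V E v0"
  using wm v0V unfolding weetman_def by auto

lemma claim1:
  "w \<in> V \<Longrightarrow> dd w = m + n \<Longrightarrow> Pr\<^sup>*\<^sup>* w u \<Longrightarrow> Pr\<^sup>*\<^sup>* w u' \<Longrightarrow> dd u = m \<Longrightarrow> dd u' = m
   \<Longrightarrow> reach E (Sp m) u u'"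
proof (induction n arbitrary: w u u')
  case 0
  then have "u = w" "u' = w" using anc_props by auto
  then show ?case using 0 by (auto intro!: reach.rrefl simp: sphere_def)
next
  case (Suc n)
  have "u \<noteq> w" using Suc by auto
  then obtain p where p: "Pr w p" "Pr\<^sup>*\<^sup>* p u" using Suc.prems(3)
    by (metis converse_rtranclpE)
  have "u' \<noteq> w" using Suc by auto
  then obtain p' where p': "Pr w p'" "Pr\<^sup>*\<^sup>* p' u'" using Suc.prems(4)
    by (metis converse_rtranclpE)
  have pV: "p \<in> V" "dd p = m + n" using p Suc.prems(2) unfolding pred_def by auto
  have "connected_set E (pred V E v0 w)" using intv Suc.prems(1) unfolding interval_condition_def by auto
  then obtain ys where "walk (pred V E v0 w) E ys" "hd ys = p" "last ys = p'"
    using p p' unfolding connected_set_def by auto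
  then have rp: "reach E (pred V E v0 w) p p'" using walk_reach by metis
  have gen: "(\<forall>z. Pr\<^sup>*\<^sup>* x z \<longrightarrow> dd z = m \<longrightarrow> reach E (Sp m) u z) \<longrightarrow>
             (\<forall>z. Pr\<^sup>*\<^sup>* y z \<longrightarrow> dd z = m \<longrightarrow> reach E (Sp m) u z)"
    if "reach E (pred V E v0 w) x y" for x y
    using that
  proof (induction rule: reach.induct)
    case (rrefl x)
    then show ?case by blast
  next
    case (rstep x y q)
    show ?case
    proof (intro impI allI)
      fix z2 assume H: "\<forall>z. Pr\<^sup>*\<^sup>* x z \<longrightarrow> dd z = m \<longrightarrow> reach E (Sp m) u z"
        and z2: "Pr\<^sup>*\<^sup>* q z2" "dd z2 = m"
      have Hy: "\<forall>z. Pr\<^sup>*\<^sup>* y z \<longrightarrow> dd z = m \<longrightarrow> reach E (Sp m) u z" using rstep.IH H by blast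
      have yq: "y \<in> pred V E v0 w" "q \<in> pred V E v0 w" using rstep.hyps reach_in[OF rstep.hyps(1)] by auto
      then have yqV: "y \<in> V" "q \<in> V" "dd y = m + n" "dd q = m + n"
        using Suc.prems(2) unfolding pred_def by auto
      show "reach E (Sp m) u z2"
      proof (cases n)
        case 0
        have "z2 = q" using z2 anc_props yqV 0 by auto
        moreover have "reach E (Sp m) u y" using Hy 0 yqV by auto
        ultimately show ?thesis using rstep.hyps(2) yqV 0
          by (auto intro: reach.rstep simp: sphere_def)
      next
        case (Suc n')
        obtain r where r: "r \<in> V" "dd r + 1 = dd y" "E r y" "E r q"
          using tri yqV rstep.hyps(2) unfolding triangle_condition_def by metis
        have ry: "Pr y r" "Pr q r" using r yqV unfolding pred_def by auto
        obtain z where z: "Pr\<^sup>*\<^sup>* r z" "dd z = m" using anc_ex[of r m] r yqV Suc by auto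
        have "Pr\<^sup>*\<^sup>* y z" using ry(1) z(1) by (rule converse_rtranclp_into_rtranclp)
        then have "reach E (Sp m) u z" using Hy z by auto
        moreover have "Pr\<^sup>*\<^sup>* q z" using ry(2) z(1) by (rule converse_rtranclp_into_rtranclp)
        then have "reach E (Sp m) z z2" using Suc.IH[of q z z2] yqV z z2 by auto
        ultimately show ?thesis using reach_trans by metis
      qed
    qed
  qed
  have "\<forall>z. Pr\<^sup>*\<^sup>* p z \<longrightarrow> dd z = m \<longrightarrow> reach E (Sp m) u z"
    using Suc.IH pV p(2) Suc.prems(5) by blast
  then show ?case using gen[OF rp] p'(2) Suc.prems(6) by blast
qed

lemma claim1': "w \<in> V \<Longrightarrow> m \<le> dd w \<Longrightarrow> Pr\<^sup>*\<^sup>* w u \<Longrightarrow> Pr\<^sup>*\<^sup>* w u' \<Longrightarrow> dd u = m \<Longrightarrow> dd u' = m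
   \<Longrightarrow> reach E (Sp m) u u'"
  using claim1[of w m "dd w - m"] by auto

lemma claim2:
  assumes "E w w'" "m < dd w" "m < dd w'" "Pr\<^sup>*\<^sup>* w z" "Pr\<^sup>*\<^sup>* w' z'" "dd z = m" "dd z' = m"
  shows "reach E (Sp m) z z'"
proof -
  have V: "w \<in> V" "w' \<in> V" using inV assms by auto
  have le: "dd w' \<le> dd w + 1" "dd w \<le> dd w' + 1" using d_edge d_edge2 assms by auto
  consider "dd w = dd w'" | "dd w' = dd w + 1" | "dd w = dd w' + 1" using le by linarith
  then show ?thesis
  proof cases
    case 1
    obtain r where r: "r \<in> V" "dd r + 1 = dd w" "E r w" "E r w'"
      using tri V 1 assms(1) unfolding triangle_condition_def by metis
    have ry: "Pr w r" "Pr w' r" using r 1 unfolding pred_def by auto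
    obtain y where y: "Pr\<^sup>*\<^sup>* r y" "dd y = m" using anc_ex[of r m] r assms by auto
    have a1: "Pr\<^sup>*\<^sup>* w y" using ry(1) y(1) by (rule converse_rtranclp_into_rtranclp)
    have a2: "Pr\<^sup>*\<^sup>* w' y" using ry(2) y(1) by (rule converse_rtranclp_into_rtranclp)
    have "reach E (Sp m) z y" using claim1'[OF V(1) _ assms(4) a1] assms y by auto
    moreover have "reach E (Sp m) y z'" using claim1'[OF V(2) _ a2 assms(5)] assms y by auto
    ultimately show ?thesis using reach_trans by metis
  next
    case 2
    have "Pr w' w" using 2 V assms(1) unfolding pred_def by auto
    then have "Pr\<^sup>*\<^sup>* w' z" using assms(4) by (rule converse_rtranclp_into_rtranclp)
    then show ?thesis using claim1'[OF V(2) _ _ assms(5)] assms by auto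
  next
    case 3
    have "Pr w w'" using 3 V assms(1) symE unfolding pred_def by auto
    then have "Pr\<^sup>*\<^sup>* w z'" using assms(5) by (rule converse_rtranclp_into_rtranclp)
    then show ?thesis using claim1'[OF V(1) _ assms(4)] assms by auto
  qed
qed

lemma core:
  assumes "reach E {x\<in>V. k \<le> dd x} c c2" "Pr\<^sup>*\<^sup>* c z" "Pr\<^sup>*\<^sup>* c2 z2" "dd z = m" "dd z2 = m" "m < k"
  shows "reach E (Sp m) z z2"
  using assms
proof (induction arbitrary: z2 rule: reach.induct)
  case (rrefl x)
  then show ?case using claim1'[of x m z z2] by auto
next
  case (rstep x y q)
  have yV: "y \<in> V" "k \<le> dd y" using reach_in[OF rstep.hyps(1)] by auto
  obtain y' where y': "Pr\<^sup>*\<^sup>* y y'" "dd y' = m" using anc_ex[of y m] yV rstep.prems by auto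
  have "reach E (Sp m) z y'" using rstep.IH y' rstep.prems by auto
  moreover have "reach E (Sp m) y' z2" using claim2[OF rstep.hyps(2) _ _ y'(1) rstep.prems(2)] rstep yV y'
    by auto
  ultimately show ?case using reach_trans by metis
qed

lemma clus_level: "cluster V E v0 X \<Longrightarrow> X \<subseteq> Sp j \<Longrightarrow> component_of E (Sp j) X"
proof -
  assume a: "cluster V E v0 X" "X \<subseteq> Sp j"
  then obtain i where i: "component_of E (Sp i) X" unfolding cluster_def by auto
  then obtain x where "x \<in> X" "X \<subseteq> Sp i" unfolding component_of_def by auto
  then have "i = j" using a(2) unfolding sphere_def by auto
  then show ?thesis using i by simp
qed

lemma main:
  assumes cl: "cluster V E v0 C" and CS: "C \<subseteq> Sp k" and k1: "k \<ge> 1"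
  shows "(\<exists>!A. cluster V E v0 A \<and> A \<subseteq> Sp (k - 1) \<and> cluster_adj E A C) \<and>
         (\<forall>A. cluster V E v0 A \<and> A \<subseteq> Sp (k - 1) \<and> cluster_adj E A C \<longrightarrow>
            (\<forall>xs. gpath V E xs \<and> hd xs = v0 \<and> last xs \<in> C \<longrightarrow> set xs \<inter> A \<noteq> {}))"
proof -
  define m where "m = k - 1"
  define L where "L = {x\<in>V. k \<le> dd x}"
  have mk: "m < k" "m + 1 = k" using k1 unfolding m_def by auto
  have Cc: "component_of E (Sp k) C" using clus_level cl CS by auto
  obtain c where c: "c \<in> C" using Cc unfolding component_of_def by auto
  have cV: "c \<in> V" "dd c = k" using c CS unfolding sphere_def by auto
  obtain a0 where a0: "a0 \<in> pred V E v0 c" using pred_ex cV k1 by auto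
  have a0V: "a0 \<in> V" "dd a0 = m" "E a0 c" using a0 cV mk unfolding pred_def by auto
  have a0S: "a0 \<in> Sp m" using a0V unfolding sphere_def by auto
  define A0 where "A0 = {y. reach E (Sp m) a0 y}"
  have A0c: "component_of E (Sp m) A0" unfolding A0_def by (rule comp_of_reach[OF a0S symE])
  have a0A0: "a0 \<in> A0" unfolding A0_def using a0S by (auto intro: reach.rrefl)
  have CL: "C \<subseteq> L" using CS unfolding L_def sphere_def by auto
  have Cr: "reach E L c x" if xC: "x \<in> C" for x
  proof -
    have "connected_set E C" using Cc unfolding component_of_def by auto
    then have "\<exists>ys. walk C E ys \<and> hd ys = c \<and> last ys = x"
      using c xC unfolding connected_set_def by auto
    then obtain ys where "walk C E ys" "hd ys = c" "last ys = x" by auto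
    then have "reach E C c x" using walk_reach by metis
    then show ?thesis using CL by (rule reach_mono)
  qed
  have ca0: "Pr\<^sup>*\<^sup>* c a0" using a0 by auto
  have key: "A = A0" if HA: "cluster V E v0 A" "A \<subseteq> Sp m" "cluster_adj E A C" for A
  proof -
    have Ac: "component_of E (Sp m) A" using clus_level HA by auto
    obtain a c' where ac: "a \<in> A" "c' \<in> C" "E a c'" using HA(3) unfolding cluster_adj_def by auto
    have "dd a = m" "dd c' = k" "a \<in> V" using ac HA(2) CS unfolding sphere_def by auto
    then have "Pr\<^sup>*\<^sup>* c' a" using ac mk unfolding pred_def by auto
    then have "reach E (Sp m) a0 a" using core[of k c c' a0 a m] unfolding L_def[symmetric]
      using Cr[OF ac(2)] ca0 a0V \<open>dd a = m\<close> mk by auto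
    then have "a \<in> A0" unfolding A0_def by simp
    then have "A0 = {y. reach E (Sp m) a y}" using comp_eq[OF A0c] by auto
    moreover have "A = {y. reach E (Sp m) a y}" using comp_eq[OF Ac ac(1)] .
    ultimately show ?thesis by simp
  qed
  have A0good: "cluster V E v0 A0 \<and> A0 \<subseteq> Sp m \<and> cluster_adj E A0 C"
  proof (intro conjI)
    show "cluster V E v0 A0" unfolding cluster_def using A0c by auto
    show "A0 \<subseteq> Sp m" using A0c unfolding component_of_def by auto
    have "a0 \<notin> C" using CS a0V mk unfolding sphere_def by auto
    then show "cluster_adj E A0 C" unfolding cluster_adj_def using a0A0 c a0V by auto
  qed
  have part2: "set xs \<inter> A0 \<noteq> {}" if xs: "gpath V E xs" "hd xs = v0" "last xs \<in> C" for xs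
  proof -
    have w: "walk V E xs" using xs unfolding gpath_def by auto
    define n where "n = length xs"
    have n0: "0 < n" using w unfolding walk_def n_def by auto
    have lastn: "last xs = xs ! (n - 1)" using n0 unfolding n_def by (simp add: last_conv_nth)
    have hd0: "xs ! 0 = v0" using xs(2) n0 unfolding n_def by (simp add: hd_conv_nth)
    have xsV: "xs ! i \<in> V" if "i < n" for i using w that unfolding walk_def n_def by auto
    define I where "I = {i. i < n \<and> dd (xs ! i) < k}"
    have fI: "finite I" unfolding I_def by auto
    have "0 \<in> I" unfolding I_def using n0 hd0 d0 mk by auto
    define j where "j = Max I"
    have jI: "j \<in> I" unfolding j_def using fI \<open>0 \<in> I\<close> Max_in by auto
    have jmax: "i \<le> j" if "i \<in> I" for i unfolding j_def using fI that by auto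
    have "dd (last xs) = k" using xs(3) CS unfolding sphere_def by auto
    then have "n - 1 \<notin> I" unfolding I_def lastn by auto
    then have "j \<noteq> n - 1" using jI by auto
    moreover have "j < n" using jI unfolding I_def by auto
    ultimately have jn: "j + 1 < n" by linarith
    have hi: "xs ! l \<in> L" if "j + 1 \<le> l" "l < n" for l
    proof -
      have "l \<notin> I" using jmax that by fastforce
      then show ?thesis unfolding L_def I_def using that xsV by auto
    qed
    have r1: "reach E L (xs ! (j+1)) (xs ! (n-1))"
      using walk_suffix_reach[OF w, of "j+1" "n-1" L] hi jn unfolding n_def by auto
    have e: "E (xs ! j) (xs ! Suc j)" using w jn unfolding walk_def n_def by auto
    have "dd (xs ! (j+1)) \<ge> k" using hi jn by (auto simp: L_def)
    moreover have "dd (xs ! j) < k" using jI unfolding I_def by auto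
    moreover note d_edge[OF e] d_edge2[OF e]
    ultimately have dj: "dd (xs ! j) = m" "dd (xs ! (j+1)) = k" using mk by auto
    have pj: "Pr\<^sup>*\<^sup>* (xs ! (j+1)) (xs ! j)" using e dj mk xsV jn unfolding pred_def by auto
    have "reach E L c (last xs)" using Cr xs(3) by auto
    moreover have "reach E L (last xs) (xs ! (j+1))" using reach_sym[OF symE r1] lastn by simp
    ultimately have "reach E L c (xs ! (j+1))" using reach_trans by metis
    then have "reach E (Sp m) a0 (xs ! j)" using core[of k c "xs ! (j+1)" a0 "xs ! j" m]
      unfolding L_def[symmetric] using ca0 pj a0V dj mk by auto
    then have "xs ! j \<in> A0" unfolding A0_def by simp
    moreover have "xs ! j \<in> set xs" using jn unfolding n_def by auto
    ultimately show ?thesis by auto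
  qed
  have "\<exists>!A. cluster V E v0 A \<and> A \<subseteq> Sp m \<and> cluster_adj E A C"
    using A0good key by (intro ex1I[of _ A0]) auto
  moreover have "\<forall>A. cluster V E v0 A \<and> A \<subseteq> Sp m \<and> cluster_adj E A C \<longrightarrow>
            (\<forall>xs. gpath V E xs \<and> hd xs = v0 \<and> last xs \<in> C \<longrightarrow> set xs \<inter> A \<noteq> {})"
  proof (intro allI impI)
    fix A xs assume H1: "cluster V E v0 A \<and> A \<subseteq> Sp m \<and> cluster_adj E A C"
      "gpath V E xs \<and> hd xs = v0 \<and> last xs \<in> C"
    then show "set xs \<inter> A \<noteq> {}" using key part2 by blast
  qed
  ultimately show ?thesis unfolding m_def by blast
qed
end


theorem mainTheorem5:
  fixes V :: "'a set" and E :: "'a \<Rightarrow> 'a \<Rightarrow> bool" and v0 :: 'a and C :: "'a set" and k :: nat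
  assumes "finite V" and "simple_graph V E" and "connected_graph V E" and "weetman V E"
    and "v0 \<in> V"
    and "cluster V E v0 C" and "C \<subseteq> sphere V E v0 k" and "k \<ge> 1"
  shows "(\<exists>!A. cluster V E v0 A \<and> A \<subseteq> sphere V E v0 (k - 1) \<and> cluster_adj E A C) \<and>
         (\<forall>A. cluster V E v0 A \<and> A \<subseteq> sphere V E v0 (k - 1) \<and> cluster_adj E A C \<longrightarrow>
            (\<forall>xs. gpath V E xs \<and> hd xs = v0 \<and> last xs \<in> C \<longrightarrow> set xs \<inter> A \<noteq> {}))"
proof -
  interpret WG V E v0 using assms by (unfold_locales) auto
  show ?thesis by (rule main[OF assms(6-8)])
qed

end
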